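(* Let $\mathcal H$ be a real separable Hilbert space with Hilbertian basis $(e_n)_{n\in\mathbb N}$, and let $H\in\mathcal C^1(\mathbb R,\mathcal L_2(\mathcal H))$. Write $h_{i,j}(t)=\langle H(t)e_i,e_j\rangle$. Assume: (i) the function $t\mapsto \|H(t)\|_{\mathsf{HS}}$ is bounded on $\mathbb R$; (ii) the family $(h_{i,j})_{i,j\in\mathbb N}$ is balanced; (iii) there exists a pointwise bounded and balanced family of measurable real-valued functions $(g_{i,j})_{i,j\in\mathbb N}$ on $\mathbb R$ such that $$\forall i\in\mathbb N,\ \forall t\in\mathbb R,\qquad h_{i,i}'(t)=\sum_{j=0}^{+\infty}g_{i,j}(t)\,|h_{i,j}(t)|^2 .$$ Suppose there exist $T>0$ and a sign sequence $(\epsilon_\ell)_{\ell\in\mathbb N}\in\{-1,1\}^{\mathbb N}$ such that $$\forall t\geq T,\ \forall k,\ell\in\mathbb N \text{ with } k\geq \ell,\qquad \epsilon_\ell\, g_{\ell,k}(t)\geq 0 .$$ Then for every $\ell\in\mathbb N$, $$\sum_{j=0}^{+\infty}\int_T^{+\infty}|g_{\ell,j}(t)|\,|h_{\ell,j}(t)|^2\,\mathrm dt<+\infty,$$ and every diagonal term $h_{\ell,\ell}(t)$ converges as $t\to+\infty$ to a real limit $h_{\ell,\ell}(\infty)$. If in addition $$\forall \ell\in\mathbb N,\ \exists c_\ell>0,\ \forall j\neq\ell,\ \forall t\geq T,\qquad |g_{\ell,j}(t)|\geq c_\ell,$$ then for every $\ell\in\mathbb N$, $$\sum_{j\neq\ell}\int_T^{+\infty}|h_{\ell,j}(t)|^2\,\mathrm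 dt=\int_T^{+\infty}\|H(t)e_\ell-h_{\ell,\ell}(t)e_\ell\|^2\,\mathrm dt<+\infty .$$ If moreover, for every $\ell\in\mathbb N$, the function $t\mapsto\|H'(t)e_\ell\|$ is bounded, then for every $\ell\in\mathbb N$, $H(t)e_\ell\to h_{\ell,\ell}(\infty)\,e_\ell$ in $\mathcal H$ as $t\to+\infty$.
   Context: $\mathcal L_2(\mathcal H)$ denotes the space of Hilbert-Schmidt operators on $\mathcal H$ with norm $\|H\|_{\mathsf{HS}}^2=\sum_n\|He_n\|^2$. A family of real-valued functions $(g_{i,j})_{i,j\in\mathbb N}$ defined on $\mathbb R$ is called balanced if for all $i,j\in\mathbb N$ there exists $c_{i,j}\in L^\infty(\mathbb R,\mathbb R_+)$ such that $|g_{i,j}(t)|\leq c_{i,j}(t)|g_{j,i}(t)|$ for all $t\in\mathbb R$. It is called pointwise bounded if for all $t\in\mathbb R$, $\sup_{i,j}|g_{i,j}(t)|<+\infty$. *)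

theory Defs
  imports "HOL-Analysis.Analysis"
begin

definition hilbert_basis :: "(nat \<Rightarrow> 'a::{real_inner,complete_space}) \<Rightarrow> bool" where
  "hilbert_basis e \<longleftrightarrow> (\<forall>i j. inner (e i) (e j) = (if i = j then 1 else 0))
      \<and> closure (span (range e)) = UNIV"

definition is_HS :: "(nat \<Rightarrow> 'a::real_inner) \<Rightarrow> ('a \<Rightarrow> 'a) \<Rightarrow> bool" where
  "is_HS e A \<longleftrightarrow> bounded_linear A \<and> summable (\<lambda>n. (norm (A (e n)))\<^sup>2)"

definition hs_norm :: "(nat \<Rightarrow> 'a::real_inner) \<Rightarrow> ('a \<Rightarrow> 'a) \<Rightarrow> real" where
  "hs_norm e A = sqrt (\<Sum>n. (norm (A (e n)))\<^sup>2)"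

definition HS_C1 :: "(nat \<Rightarrow> 'a::real_inner) \<Rightarrow> (real \<Rightarrow> 'a \<Rightarrow> 'a) \<Rightarrow> (real \<Rightarrow> 'a \<Rightarrow> 'a) \<Rightarrow> bool" where
  "HS_C1 e H H' \<longleftrightarrow> (\<forall>t. is_HS e (H t) \<and> is_HS e (H' t))
     \<and> (\<forall>t. ((\<lambda>s. hs_norm e (\<lambda>x. H s x - H t x - (s - t) *\<^sub>R H' t x) / \<bar>s - t\<bar>) \<longlongrightarrow> 0) (at t))
     \<and> (\<forall>t. ((\<lambda>s. hs_norm e (\<lambda>x. H' s x - H' t x)) \<longlongrightarrow> 0) (at t))"

definition balanced :: "(nat \<Rightarrow> nat \<Rightarrow> real \<Rightarrow> real) \<Rightarrow> bool" where
  "balanced g \<longleftrightarrow> (\<forall>i j. \<exists>c::real \<Rightarrow> real.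
      c \<in> borel_measurable lborel \<and> (\<forall>t. c t \<ge> 0) \<and> (\<exists>B. AE t in lborel. c t \<le> B)
      \<and> (\<forall>t. \<bar>g i j t\<bar> \<le> c t * \<bar>g j i t\<bar>))"

definition pointwise_bounded :: "(nat \<Rightarrow> nat \<Rightarrow> real \<Rightarrow> real) \<Rightarrow> bool" where
  "pointwise_bounded g \<longleftrightarrow> (\<forall>t. \<exists>B. \<forall>i j. \<bar>g i j t\<bar> \<le> B)"

end

theory Submission
  imports Defs
begin


lemma norm_diff3_sq:
  fixes a b d :: "'a::real_normed_vector"
  shows "(norm (a - b - c *\<^sub>R d))\<^sup>2 \<le> 3 * ((norm a)\<^sup>2 + (norm b)\<^sup>2 + c\<^sup>2 * (norm d)\<^sup>2)"
proof -
  have "norm (a - b - c *\<^sub>R d) \<le> norm a + norm b + \<bar>c\<bar> * norm d"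
    using norm_triangle_ineq4[of "a - b" "c *\<^sub>R d"] norm_triangle_ineq4[of a b] by simp
  moreover have "0 \<le> norm (a - b - c *\<^sub>R d)" by simp
  ultimately have "(norm (a - b - c *\<^sub>R d))\<^sup>2 \<le> (norm a + norm b + \<bar>c\<bar> * norm d)\<^sup>2"
    by (simp add: power_mono)
  also have "\<dots> \<le> 3 * ((norm a)\<^sup>2 + (norm b)\<^sup>2 + c\<^sup>2 * (norm d)\<^sup>2)"
  proof -
    have "\<And>x y z::real. (x+y+z)\<^sup>2 \<le> 3*(x\<^sup>2+y\<^sup>2+z\<^sup>2)"
    proof -
      fix x y z :: real
      have "3*(x\<^sup>2+y\<^sup>2+z\<^sup>2) - (x+y+z)\<^sup>2 = (x-y)\<^sup>2+(y-z)\<^sup>2+(x-z)\<^sup>2"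
        by (simp add: power2_eq_square algebra_simps)
      moreover have "0 \<le> (x-y)\<^sup>2+(y-z)\<^sup>2+(x-z)\<^sup>2" by simp
      ultimately show "(x+y+z)\<^sup>2 \<le> 3*(x\<^sup>2+y\<^sup>2+z\<^sup>2)" by linarith
    qed
    from this[of "norm a" "norm b" "\<bar>c\<bar> * norm d"] show ?thesis by (simp add: power_mult_distrib)
  qed
  finally show ?thesis .
qed

lemma hs_eval_le:
  assumes "summable (\<lambda>n. (norm (A (e n)))\<^sup>2)"
  shows "norm (A (e l)) \<le> hs_norm e A"
proof -
  have "sum (\<lambda>n. (norm (A (e n)))\<^sup>2) {l} \<le> (\<Sum>n. (norm (A (e n)))\<^sup>2)"
    by (rule sum_le_suminf[OF assms]) auto
  then show ?thesis unfolding hs_norm_def by (simp add: real_le_rsqrt)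
qed

lemma summable_diff3:
  assumes "summable (\<lambda>n. (norm (a n))\<^sup>2)" "summable (\<lambda>n. (norm (b n))\<^sup>2)" "summable (\<lambda>n. (norm (d n))\<^sup>2)"
  shows "summable (\<lambda>n. (norm (a n - b n - c *\<^sub>R d n))\<^sup>2)"
proof (rule summable_comparison_test'[where g="\<lambda>n. 3 * ((norm (a n))\<^sup>2 + (norm (b n))\<^sup>2 + c\<^sup>2 * (norm (d n))\<^sup>2)"])
  show "summable (\<lambda>n. 3 * ((norm (a n))\<^sup>2 + (norm (b n))\<^sup>2 + c\<^sup>2 * (norm (d n))\<^sup>2))"
    using assms by (intro summable_mult summable_add summable_mult) auto
  show "norm ((norm (a n - b n - c *\<^sub>R d n))\<^sup>2) \<le> 3 * ((norm (a n))\<^sup>2 + (norm (b n))\<^sup>2 + c\<^sup>2 * (norm (d n))\<^sup>2)" for n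
    using norm_diff3_sq[of "a n" "b n" c "d n"] by simp
qed

locale thm_setup =
  fixes e :: "nat \<Rightarrow> 'a::{real_inner,complete_space}"
    and H H' :: "real \<Rightarrow> 'a \<Rightarrow> 'a"
    and h g :: "nat \<Rightarrow> nat \<Rightarrow> real \<Rightarrow> real"
    and T :: real and \<epsilon> :: "nat \<Rightarrow> real" and B :: real
  assumes basis: "hilbert_basis e"
    and C1: "HS_C1 e H H'"
    and h_def: "\<And>i j t. h i j t = inner (H t (e i)) (e j)"
    and bdd: "\<And>t. hs_norm e (H t) \<le> B"
    and h_bal: "balanced h"
    and g_meas: "\<And>i j. g i j \<in> borel_measurable lborel"
    and g_bal: "balanced g"
    and deriv_eq: "\<And>i t. (\<lambda>j. g i j t * \<bar>h i j t\<bar>\<^sup>2) sums (deriv (h i i) t)"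
    and T_pos: "T > 0"
    and eps: "\<And>l. \<epsilon> l \<in> {-1, 1}"
    and sign: "\<And>t k l. t \<ge> T \<Longrightarrow> k \<ge> l \<Longrightarrow> \<epsilon> l * g l k t \<ge> 0"
begin

lemma sumH: "summable (\<lambda>n. (norm (H t (e n)))\<^sup>2)"
  using C1 unfolding HS_C1_def is_HS_def by blast

lemma sumH': "summable (\<lambda>n. (norm (H' t (e n)))\<^sup>2)"
  using C1 unfolding HS_C1_def is_HS_def by blast

lemma normH: "norm (H t (e l)) \<le> B"
  using hs_eval_le[of "H t" e l, OF sumH] bdd order_trans by blast

lemma B_nonneg: "0 \<le> B"
  using normH[of 0 0] norm_ge_zero order_trans by blast

lemma norm_e: "norm (e j) = 1"
  using basis unfolding hilbert_basis_def by (simp add: norm_eq_sqrt_inner)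

lemma inner_e: "inner (e i) (e j) = (if i = j then 1 else 0)"
  using basis unfolding hilbert_basis_def by blast

lemma abs_inner_e: "\<bar>inner x (e j)\<bar> \<le> norm x"
  using Cauchy_Schwarz_ineq2[of x "e j"] norm_e by simp

lemma h_abs: "\<bar>h l j t\<bar> \<le> B"
  using abs_inner_e normH h_def order_trans by metis

lemma Hder: "((\<lambda>t. H t (e l)) has_vector_derivative H' t (e l)) (at t)"
proof -
  let ?A = "\<lambda>s. (\<lambda>x. H s x - H t x - (s - t) *\<^sub>R H' t x)"
  have lim: "((\<lambda>s. hs_norm e (?A s) / \<bar>s - t\<bar>) \<longlongrightarrow> 0) (at t)"
    using C1 unfolding HS_C1_def by blast
  have le: "norm (norm (H s (e l) - H t (e l) - (s - t) *\<^sub>R H' t (e l)) / norm (s - t))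
        \<le> hs_norm e (?A s) / \<bar>s - t\<bar>" for s
  proof -
    have "summable (\<lambda>n. (norm (?A s (e n)))\<^sup>2)"
      using summable_diff3[OF sumH sumH sumH'] by simp
    from hs_eval_le[of "?A s" e l, OF this] have "norm (H s (e l) - H t (e l) - (s - t) *\<^sub>R H' t (e l)) \<le> hs_norm e (?A s)" by simp
    from divide_right_mono[OF this abs_ge_zero[of "s - t"]] show ?thesis by simp
  qed
  have "((\<lambda>s. norm (H s (e l) - H t (e l) - (s - t) *\<^sub>R H' t (e l)) / norm (s - t)) \<longlongrightarrow> 0) (at t)"
    by (rule Lim_null_comparison[OF _ lim]) (use le in auto)
  then show ?thesis
    unfolding has_vector_derivative_def has_derivative_iff_norm
    by (auto intro: bounded_linear_scaleR_left)
qed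

lemma H'cont: "isCont (\<lambda>t. H' t (e l)) t"
proof -
  have lim: "((\<lambda>s. hs_norm e (\<lambda>x. H' s x - H' t x)) \<longlongrightarrow> 0) (at t)"
    using C1 unfolding HS_C1_def by blast
  have le: "norm (H' s (e l) - H' t (e l)) \<le> hs_norm e (\<lambda>x. H' s x - H' t x)" for s
  proof -
    have "summable (\<lambda>n. (norm (H' s (e n) - H' t (e n) - 0 *\<^sub>R H' t (e n)))\<^sup>2)"
      by (rule summable_diff3[OF sumH' sumH' sumH'])
    then have "summable (\<lambda>n. (norm ((\<lambda>x. H' s x - H' t x) (e n)))\<^sup>2)" by simp
    from hs_eval_le[of "\<lambda>x. H' s x - H' t x" e l, OF this] show ?thesis by simp
  qed
  have "((\<lambda>s. H' s (e l) - H' t (e l)) \<longlongrightarrow> 0) (at t)"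
    by (rule Lim_null_comparison[OF _ lim]) (use le in auto)
  then have "((\<lambda>s. H' s (e l) - H' t (e l) + H' t (e l)) \<longlongrightarrow> 0 + H' t (e l)) (at t)"
    by (intro tendsto_add tendsto_const)
  then show ?thesis unfolding isCont_def by simp
qed

lemma Hcont: "isCont (\<lambda>t. H t (e l)) t"
  using has_vector_derivative_continuous[OF Hder] .

lemma hcont: "isCont (h l j) t"
proof -
  have "isCont (\<lambda>t. inner (H t (e l)) (e j)) t"
    by (intro continuous_intros Hcont)
  then show ?thesis by (simp add: h_def[abs_def])
qed

lemma hcont_on: "continuous_on S (h l j)"
  by (simp add: continuous_at_imp_continuous_on hcont)

lemma h_meas[measurable]: "h l j \<in> borel_measurable lborel"
  using borel_measurable_continuous_onI[OF hcont_on] by simp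

definition D :: "nat \<Rightarrow> real \<Rightarrow> real" where "D l t = inner (H' t (e l)) (e l)"

lemma Dcont: "isCont (D l) t"
  unfolding D_def[abs_def] by (intro continuous_intros H'cont)

lemma Dcont_on: "continuous_on S (D l)"
  by (simp add: continuous_at_imp_continuous_on Dcont)

lemma D_meas[measurable]: "D l \<in> borel_measurable lborel"
  using borel_measurable_continuous_onI[OF Dcont_on] by simp

lemma hder: "(h l l has_real_derivative D l t) (at t)"
proof -
  have "((\<lambda>t. inner (H t (e l)) (e l)) has_derivative (\<lambda>x. inner (H t (e l)) 0 + inner (x *\<^sub>R H' t (e l)) (e l))) (at t)"
    using has_derivative_inner[OF Hder[unfolded has_vector_derivative_def] has_derivative_const[of "e l"]] .
  moreover have "(\<lambda>x. inner (H t (e l)) 0 + inner (x *\<^sub>R H' t (e l)) (e l)) = (*) (D l t)"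
    by (rule ext) (simp add: D_def)
  ultimately show ?thesis
    unfolding has_field_derivative_def h_def[abs_def] by simp
qed

lemma deriv_hll: "deriv (h l l) t = D l t"
  using DERIV_imp_deriv[OF hder] .

end


lemma parseval:
  fixes e :: "nat \<Rightarrow> 'a::{real_inner,complete_space}"
  assumes b: "hilbert_basis e"
  shows "(\<lambda>j. (inner v (e j))\<^sup>2) sums (norm v)\<^sup>2"
proof -
  have ie: "inner (e i) (e j) = (if i = j then 1 else 0)" for i j
    using b unfolding hilbert_basis_def by blast
  define a where "a j = inner v (e j)" for j
  define P where "P n = (\<Sum>j<n. a j *\<^sub>R e j)" for n
  define s where "s n = (\<Sum>j<n. (a j)\<^sup>2)" for n
  have orth: "inner (v - P n) (e k) = 0" if "k < n" for n k
  proof -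
    have "inner (P n) (e k) = (\<Sum>j<n. a j * (if j = k then 1 else 0))"
      by (simp add: P_def inner_sum_left ie)
    also have "\<dots> = a k" using that by (simp add: if_distrib sum.delta cong: if_cong)
    finally show ?thesis by (simp add: inner_diff_left a_def)
  qed
  have vP: "inner v (P n) = s n" for n
    by (simp add: P_def s_def inner_sum_right a_def power2_eq_square)
  have xP: "inner x (P n) = (\<Sum>j<n. a j * inner x (e j))" for x n
    by (simp add: P_def inner_sum_right)
  have vPP: "inner (v - P n) (P n) = 0" for n
    unfolding xP by (simp add: orth)
  have PP: "inner (P n) (P n) = s n" for n
    using vPP[of n] vP[of n] by (simp add: inner_diff_left)
  have err: "(norm (v - P n))\<^sup>2 = (norm v)\<^sup>2 - s n" for n
    using vP[of n] PP[of n] by (simp add: power2_norm_eq_inner inner_diff_left inner_diff_right inner_commute)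
  have Pspan: "P n \<in> span (e ` {..<n})" for n
    unfolding P_def by (intro span_sum span_scale span_base) auto
  have best: "(norm v)\<^sup>2 - s n \<le> (norm (v - w))\<^sup>2" if "w \<in> span (e ` {..<n})" for n w
  proof -
    have "P n - w \<in> span (e ` {..<n})" using Pspan that by (simp add: span_diff)
    then have o: "orthogonal (v - P n) (P n - w)"
      by (rule orthogonal_to_span) (auto simp: orthogonal_def orth)
    have "(norm ((v - P n) + (P n - w)))\<^sup>2 = (norm (v - P n))\<^sup>2 + (norm (P n - w))\<^sup>2"
      unfolding power2_norm_eq_inner inner_add_left inner_add_right using o by (simp add: orthogonal_def inner_commute)
    then have "(norm (v - w))\<^sup>2 = (norm (v - P n))\<^sup>2 + (norm (P n - w))\<^sup>2" by simp
    then show ?thesis using err[of n] by simp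
  qed
  have fin: "\<exists>n. w \<in> span (e ` {..<n})" if "w \<in> span (range e)" for w
  proof -
    from that obtain t r where t: "finite t" "t \<subseteq> range e" and w: "w = (\<Sum>x\<in>t. r x *\<^sub>R x)"
      unfolding span_explicit by blast
    from finite_subset_image[OF t(1) t(2)] obtain C where C: "finite C" "t = e ` C" by auto
    from finite_nat_bounded[OF C(1)] obtain k where "C \<subseteq> {..<k}" by auto
    then have "t \<subseteq> e ` {..<k}" using C by auto
    moreover have "w \<in> span t" unfolding w by (intro span_sum span_scale span_base)
    ultimately show ?thesis by (meson span_mono subsetD)
  qed
  have smono: "s m \<le> s n" if "m \<le> n" for m n
    unfolding s_def by (rule sum_mono2) (use that in auto)
  have sle: "s n \<le> (norm v)\<^sup>2" for n using err[of n] by (metis diff_ge_0_iff_ge zero_le_power2)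
  have "(\<lambda>n. s n) \<longlonglongrightarrow> (norm v)\<^sup>2"
  proof (rule LIMSEQ_I)
    fix r :: real assume r: "0 < r"
    have "v \<in> closure (span (range e))" using b unfolding hilbert_basis_def by simp
    then obtain w where w: "w \<in> span (range e)" "dist w v < sqrt r"
      unfolding closure_approachable using r by (meson real_sqrt_gt_zero)
    from fin[OF w(1)] obtain N where N: "w \<in> span (e ` {..<N})" by auto
    have "norm (v - w) < sqrt r" using w(2) by (simp add: dist_norm norm_minus_commute)
    then have "(norm (v - w))\<^sup>2 < r"
    proof -
      have "(norm (v - w))\<^sup>2 < (sqrt r)\<^sup>2"
        by (rule power_strict_mono) (use \<open>norm (v - w) < sqrt r\<close> in auto)
      then show ?thesis using r by simp
    qed
    with best[OF N] have "(norm v)\<^sup>2 - s N < r" by linarith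
    then show "\<exists>no. \<forall>n\<ge>no. norm (s n - (norm v)\<^sup>2) < r"
    proof (intro exI[of _ N] allI impI)
      fix n assume "N \<le> n"
      then have "s N \<le> s n" by (rule smono)
      moreover have "norm (s n - (norm v)\<^sup>2) = (norm v)\<^sup>2 - s n" using sle[of n] by simp
      ultimately show "norm (s n - (norm v)\<^sup>2) < r" using \<open>(norm v)\<^sup>2 - s N < r\<close> by linarith
    qed
  qed
  then show ?thesis unfolding sums_def s_def a_def .
qed



lemma set_integrable_sum':
  fixes f :: "nat \<Rightarrow> real \<Rightarrow> real"
  assumes "finite I" "\<And>j. j \<in> I \<Longrightarrow> set_integrable M A (f j)"
  shows "set_integrable M A (\<lambda>t. \<Sum>j\<in>I. f j t)"
proof -
  have "integrable M (\<lambda>t. \<Sum>j\<in>I. indicator A t *\<^sub>R f j t)"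
    using assms unfolding set_integrable_def by (intro Bochner_Integration.integrable_sum[where f="\<lambda>j t. indicator A t *\<^sub>R f j t"]) auto
  then show ?thesis unfolding set_integrable_def by (simp add: sum_distrib_left)
qed

lemma ennreal_le_mult_aux:
  assumes "a \<le> C * b" "0 \<le> C" "0 \<le> b"
  shows "ennreal a \<le> ennreal C * ennreal b"
  using assms by (simp add: ennreal_mult[symmetric] ennreal_leI)

lemma ennreal_term_le_suminf: "(f::nat \<Rightarrow> ennreal) j \<le> (\<Sum>i. f i)"
proof -
  have "sum f {j} \<le> (\<Sum>i. f i)" by (rule sum_le_suminf) auto
  then show ?thesis by simp
qed

context thm_setup begin

declare g_meas[measurable]

definition phi where "phi l j t = g l j t * \<bar>h l j t\<bar>\<^sup>2"

lemma phi_meas[measurable]: "phi l j \<in> borel_measurable lborel"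
  unfolding phi_def by measurable

lemma abs_phi: "\<bar>phi l j t\<bar> = \<bar>g l j t\<bar> * \<bar>h l j t\<bar>\<^sup>2"
  by (simp add: phi_def abs_mult)

definition F where "F l j = (\<integral>\<^sup>+ t \<in> {T..}. ennreal (\<bar>g l j t\<bar> * \<bar>h l j t\<bar>\<^sup>2) \<partial>lborel)"

lemma F_alt: "F l j = (\<integral>\<^sup>+ t. ennreal \<bar>phi l j t\<bar> * indicator {T..} t \<partial>lborel)"
  unfolding F_def abs_phi ..

lemma eps_abs: "\<bar>\<epsilon> l\<bar> = 1" using eps[of l] by auto
lemma eps_sq: "\<epsilon> l * \<epsilon> l = 1" using eps[of l] by auto

lemma bal_bound: "\<exists>C\<ge>0. AE t in lborel. \<bar>phi l j t\<bar> \<le> C * \<bar>phi j l t\<bar>"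
proof -
  from g_bal[unfolded balanced_def, rule_format, of l j] obtain c1 where
    c1': "\<forall>t. c1 t \<ge> 0" "\<exists>B. AE t in lborel. c1 t \<le> B" "\<forall>t. \<bar>g l j t\<bar> \<le> c1 t * \<bar>g j l t\<bar>"
    by blast
  from c1'(2) obtain B1 where B1: "AE t in lborel. c1 t \<le> B1" by blast
  note c1 = c1'(1) B1 c1'(3)
  from h_bal[unfolded balanced_def, rule_format, of l j] obtain c2 where
    c2': "\<forall>t. c2 t \<ge> 0" "\<exists>B. AE t in lborel. c2 t \<le> B" "\<forall>t. \<bar>h l j t\<bar> \<le> c2 t * \<bar>h j l t\<bar>"
    by blast
  from c2'(2) obtain B2 where B2: "AE t in lborel. c2 t \<le> B2" by blast
  note c2 = c2'(1) B2 c2'(3)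
  let ?C = "max B1 0 * (max B2 0)\<^sup>2"
  have "AE t in lborel. \<bar>phi l j t\<bar> \<le> ?C * \<bar>phi j l t\<bar>"
    using c1(2) c2(2)
  proof eventually_elim
    case (elim t)
    have "c1 t * \<bar>g j l t\<bar> \<le> max B1 0 * \<bar>g j l t\<bar>"
      by (rule mult_right_mono) (use elim in auto)
    then have a: "\<bar>g l j t\<bar> \<le> max B1 0 * \<bar>g j l t\<bar>" using c1(3) order_trans by blast
    have "c2 t * \<bar>h j l t\<bar> \<le> max B2 0 * \<bar>h j l t\<bar>"
      by (rule mult_right_mono) (use elim in auto)
    then have b0: "\<bar>h l j t\<bar> \<le> max B2 0 * \<bar>h j l t\<bar>" using c2(3) order_trans by blast
    have b: "\<bar>h l j t\<bar>\<^sup>2 \<le> (max B2 0)\<^sup>2 * \<bar>h j l t\<bar>\<^sup>2"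
      using power_mono[OF b0, of 2] by (simp add: power_mult_distrib)
    have "\<bar>g l j t\<bar> * \<bar>h l j t\<bar>\<^sup>2 \<le> (max B1 0 * \<bar>g j l t\<bar>) * ((max B2 0)\<^sup>2 * \<bar>h j l t\<bar>\<^sup>2)"
      by (rule mult_mono[OF a b]) auto
    then show ?case unfolding abs_phi by (simp add: ac_simps)
  qed
  then show ?thesis by (intro exI[of _ ?C]) auto
qed

lemma F_bal: "\<exists>C. F l j \<le> ennreal C * F j l"
proof -
  obtain C where C: "C \<ge> 0" "AE t in lborel. \<bar>phi l j t\<bar> \<le> C * \<bar>phi j l t\<bar>"
    using bal_bound by blast
  have "F l j \<le> (\<integral>\<^sup>+ t. ennreal C * (ennreal \<bar>phi j l t\<bar> * indicator {T..} t) \<partial>lborel)"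
    unfolding F_alt
  proof (rule nn_integral_mono_AE)
    show "AE t in lborel. ennreal \<bar>phi l j t\<bar> * indicator {T..} t \<le> ennreal C * (ennreal \<bar>phi j l t\<bar> * indicator {T..} t)"
      using C(2)
    proof eventually_elim
      case (elim t)
      then show ?case using ennreal_le_mult_aux[OF elim C(1)] by (auto split: split_indicator)
    qed
  qed
  also have "\<dots> = ennreal C * F j l"
    unfolding F_alt by (rule nn_integral_cmult) measurable
  finally show ?thesis by blast
qed

lemma F_fin_lower:
  assumes IH: "(\<Sum>i. F j i) < \<infinity>"
  shows "F l j < \<infinity>"
proof -
  obtain C where C: "F l j \<le> ennreal C * F j l" using F_bal by blast
  have "F j l < \<infinity>" using ennreal_term_le_suminf[of "F j" l] IH by (simp add: le_less_trans)
  then have "ennreal C * F j l < \<infinity>" by (simp add: ennreal_mult_less_top)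
  then show ?thesis using C by (simp add: le_less_trans)
qed

lemma phi_int:
  assumes "F l j < \<infinity>"
  shows "set_integrable lborel {T..} (phi l j)"
  unfolding set_integrable_def
proof (rule integrableI_bounded)
  show "(\<lambda>x. indicat_real {T..} x *\<^sub>R phi l j x) \<in> borel_measurable lborel" by measurable
  have "(\<integral>\<^sup>+ x. ennreal (norm (indicat_real {T..} x *\<^sub>R phi l j x)) \<partial>lborel) = F l j"
    unfolding F_alt by (rule nn_integral_cong) (auto split: split_indicator)
  then show "(\<integral>\<^sup>+ x. ennreal (norm (indicat_real {T..} x *\<^sub>R phi l j x)) \<partial>lborel) < \<infinity>"
    using assms by simp
qed

definition R where "R l t = (\<Sum>j<l. \<bar>phi l j t\<bar> - \<epsilon> l * phi l j t)"

lemma R_meas[measurable]: "R l \<in> borel_measurable lborel"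
  unfolding R_def by measurable

lemma R_nonneg: "0 \<le> R l t"
proof -
  have "0 \<le> \<bar>phi l j t\<bar> - \<epsilon> l * phi l j t" for j
    using abs_ge_self[of "\<epsilon> l * phi l j t"] eps_abs[of l] by (simp add: abs_mult)
  then show ?thesis unfolding R_def by (intro sum_nonneg) auto
qed

lemma R_int:
  assumes "\<And>j. j < l \<Longrightarrow> F l j < \<infinity>"
  shows "set_integrable lborel {T..} (R l)"
  unfolding R_def
proof (rule set_integrable_sum')
  fix j assume "j \<in> {..<l}"
  then have i: "set_integrable lborel {T..} (phi l j)" using assms phi_int by auto
  show "set_integrable lborel {T..} (\<lambda>t. \<bar>phi l j t\<bar> - \<epsilon> l * phi l j t)"
    by (intro set_integral_diff set_integrable_abs set_integrable_mult_right i)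
qed auto

lemma sums_abs:
  assumes "t \<ge> T"
  shows "(\<lambda>j. \<bar>phi l j t\<bar>) sums (\<epsilon> l * D l t + R l t)"
proof -
  have "(\<lambda>j. phi l j t) sums D l t"
    using deriv_eq[of l t] unfolding deriv_hll phi_def .
  then have s1: "(\<lambda>j. \<epsilon> l * phi l j t) sums (\<epsilon> l * D l t)" by (rule sums_mult)
  let ?r = "\<lambda>j. if j < l then \<bar>phi l j t\<bar> - \<epsilon> l * phi l j t else 0"
  have "?r sums (\<Sum>j\<in>{..<l}. ?r j)" by (rule sums_finite) auto
  then have s2: "?r sums R l t" unfolding R_def by simp
  have eq: "\<epsilon> l * phi l j t + ?r j = \<bar>phi l j t\<bar>" for j
  proof (cases "j < l")
    case False
    then have "0 \<le> \<epsilon> l * g l j t" using sign[OF assms, of l j] by simp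
    then have "0 \<le> \<epsilon> l * phi l j t" unfolding phi_def by (simp add: mult.assoc[symmetric])
    moreover have "\<bar>\<epsilon> l * phi l j t\<bar> = \<bar>phi l j t\<bar>" using eps_abs[of l] by (simp add: abs_mult)
    ultimately show ?thesis using False by simp
  qed simp
  from sums_add[OF s1 s2] show ?thesis unfolding eq .
qed

lemma Q_nonneg: "t \<ge> T \<Longrightarrow> 0 \<le> \<epsilon> l * D l t + R l t"
  by (rule sums_le[OF _ sums_zero sums_abs]) simp_all

lemma FTC_h:
  assumes "T \<le> x"
  shows "set_integrable lborel {T..x} (D l)" "(LINT t:{T..x}|lborel. D l t) = h l l x - h l l T"
proof -
  show "set_integrable lborel {T..x} (D l)"
    by (rule borel_integrable_atLeastAtMost'[OF Dcont_on])
  show "(LINT t:{T..x}|lborel. D l t) = h l l x - h l l T"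
    unfolding set_lebesgue_integral_def
  proof (rule integral_FTC_atLeastAtMost[OF assms])
    fix y show "(h l l has_vector_derivative D l y) (at y within {T..x})"
      using hder[of l y] by (simp add: has_real_derivative_iff_has_vector_derivative has_vector_derivative_at_within)
  qed (rule Dcont_on)
qed

lemma SUP_indicator_Icc:
  "(SUP n::nat. (x::ennreal) * indicator {T..T + real n} t) = x * indicator {T..} t"
proof (cases "T \<le> t")
  case True
  obtain n :: nat where n: "t - T \<le> real n" using real_arch_simple by blast
  have le: "x * indicator {T..T + real m} t \<le> x * indicator {T..} t" for m
    using True by (simp split: split_indicator)
  have "x * indicator {T..} t = x * indicator {T..T + real n} t"
    using n True by (simp split: split_indicator)
  also have "\<dots> \<le> (SUP n::nat. x * indicator {T..T + real n} t)"
    by (rule SUP_upper) simp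
  finally have "x * indicator {T..} t \<le> (SUP n::nat. x * indicator {T..T + real n} t)" .
  moreover have "(SUP n::nat. x * indicator {T..T + real n} t) \<le> x * indicator {T..} t"
    by (rule SUP_least) (rule le)
  ultimately show ?thesis by (rule antisym[rotated])
next
  case False
  then show ?thesis by (simp split: split_indicator)
qed

lemma incseq_indicator_Icc:
  "incseq (\<lambda>n t. (f t::ennreal) * indicator {T..T + real n} t)"
proof (rule incseq_SucI, rule le_funI)
  fix n t
  have "indicator {T..T + real n} t \<le> (indicator {T..T + real (Suc n)} t :: ennreal)"
    by (simp split: split_indicator)
  then show "f t * indicator {T..T + real n} t \<le> f t * indicator {T..T + real (Suc n)} t"
    by (rule mult_left_mono) simp
qed

lemma sumF_eq: "(\<Sum>j. F l j) = (\<integral>\<^sup>+ t. ennreal (\<epsilon> l * D l t + R l t) * indicator {T..} t \<partial>lborel)"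
proof -
  have "(\<Sum>j. F l j) = (\<integral>\<^sup>+ t. (\<Sum>j. ennreal \<bar>phi l j t\<bar> * indicator {T..} t) \<partial>lborel)"
    unfolding F_alt by (rule nn_integral_suminf[symmetric]) measurable
  also have "\<dots> = (\<integral>\<^sup>+ t. ennreal (\<epsilon> l * D l t + R l t) * indicator {T..} t \<partial>lborel)"
  proof (rule nn_integral_cong)
    fix t show "(\<Sum>j. ennreal \<bar>phi l j t\<bar> * indicator {T..} t) = ennreal (\<epsilon> l * D l t + R l t) * indicator {T..} t"
    proof (cases "T \<le> t")
      case True
      have "(\<Sum>j. ennreal \<bar>phi l j t\<bar>) = ennreal (\<epsilon> l * D l t + R l t)"
        by (rule suminf_ennreal_eq[OF _ sums_abs[OF True]]) simp
      then show ?thesis by (simp only: ennreal_suminf_multc)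
    next
      case False
      then show ?thesis by simp
    qed
  qed
  finally show ?thesis .
qed

lemma step:
  assumes IH: "\<And>m. m < l \<Longrightarrow> (\<Sum>i. F m i) < \<infinity>"
  shows "(\<Sum>j. F l j) < \<infinity>"
proof -
  have fl: "F l j < \<infinity>" if "j < l" for j using F_fin_lower[OF IH[OF that]] .
  have Rint: "set_integrable lborel {T..} (R l)" by (rule R_int[OF fl])
  define M where "M = 2 * B + (LINT t:{T..}|lborel. R l t)"
  define q where "q t = \<epsilon> l * D l t + R l t" for t
  have q_meas[measurable]: "q \<in> borel_measurable lborel" unfolding q_def by measurable
  have bound: "(LINT t:{T..x}|lborel. q t) \<le> M" and qint: "set_integrable lborel {T..x} q" if "T \<le> x" for x
  proof -
    have RintX: "set_integrable lborel {T..x} (R l)"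
      by (rule set_integrable_subset[OF Rint]) auto
    note Dx = FTC_h[OF that, of l]
    show qint: "set_integrable lborel {T..x} q"
      unfolding q_def by (intro set_integral_add set_integrable_mult_right Dx(1) RintX)
    have "(LINT t:{T..x}|lborel. q t) = \<epsilon> l * (h l l x - h l l T) + (LINT t:{T..x}|lborel. R l t)"
      unfolding q_def by (subst set_integral_add(2)) (auto intro: Dx(1) RintX simp: set_integral_mult_right Dx(2))
    also have "\<epsilon> l * (h l l x - h l l T) \<le> 2 * B"
    proof -
      have "\<bar>\<epsilon> l * (h l l x - h l l T)\<bar> \<le> 2 * B"
        using h_abs[of l l x] h_abs[of l l T] eps_abs[of l] by (simp add: abs_mult)
      then show ?thesis by simp
    qed
    also have "(LINT t:{T..x}|lborel. R l t) \<le> (LINT t:{T..}|lborel. R l t)"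
      unfolding set_lebesgue_integral_def
      by (rule integral_mono) (use RintX Rint R_nonneg in \<open>auto simp: set_integrable_def split: split_indicator\<close>)
    finally show "(LINT t:{T..x}|lborel. q t) \<le> M" unfolding M_def by simp
  qed
  have "(\<Sum>j. F l j) = (\<integral>\<^sup>+ t. ennreal (q t) * indicator {T..} t \<partial>lborel)"
    unfolding q_def by (rule sumF_eq)
  also have "\<dots> = (\<integral>\<^sup>+ t. (SUP n. ennreal (q t) * indicator {T..T + real n} t) \<partial>lborel)"
    by (simp add: SUP_indicator_Icc)
  also have "\<dots> = (SUP n. (\<integral>\<^sup>+ t. ennreal (q t) * indicator {T..T + real n} t \<partial>lborel))"
  proof (rule nn_integral_monotone_convergence_SUP)
    show "incseq (\<lambda>n t. ennreal (q t) * indicator {T..T + real n} t)"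
      by (rule incseq_indicator_Icc)
  qed measurable
  also have "\<dots> \<le> ennreal M"
  proof (rule SUP_least)
    fix n :: nat
    have "(\<integral>\<^sup>+ t. ennreal (q t) * indicator {T..T + real n} t \<partial>lborel)
        = (\<integral>\<^sup>+ t. ennreal (indicator {T..T + real n} t *\<^sub>R q t) \<partial>lborel)"
      by (rule nn_integral_cong) (simp split: split_indicator)
    also have "\<dots> = ennreal (LINT t:{T..T + real n}|lborel. q t)"
      unfolding set_lebesgue_integral_def
    proof (rule nn_integral_eq_integral)
      show "integrable lborel (\<lambda>t. indicat_real {T..T + real n} t *\<^sub>R q t)"
        using qint[of "T + real n"] by (simp add: set_integrable_def)
      show "AE t in lborel. 0 \<le> indicat_real {T..T + real n} t *\<^sub>R q t"
        using Q_nonneg unfolding q_def by (simp split: split_indicator)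
    qed
    also have "\<dots> \<le> ennreal M" using bound[of "T + real n"] by (simp add: ennreal_leI)
    finally show "(\<integral>\<^sup>+ t. ennreal (q t) * indicator {T..T + real n} t \<partial>lborel) \<le> ennreal M" .
  qed
  also have "\<dots> < \<infinity>" by simp
  finally show ?thesis .
qed

lemma F_sum_fin: "(\<Sum>j. F l j) < \<infinity>"
proof (induction l rule: less_induct)
  case (less l)
  then show ?case by (rule step)
qed

end


lemma lip_from_deriv:
  fixes f f' :: "real \<Rightarrow> real"
  assumes d: "\<And>x. (f has_real_derivative f' x) (at x)" and b: "\<And>x. \<bar>f' x\<bar> \<le> K"
  shows "\<bar>f s - f t\<bar> \<le> K * \<bar>s - t\<bar>"
proof -
  have *: "\<bar>f b - f a\<bar> \<le> K * \<bar>b - a\<bar>" if ab: "a < b" for a b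
  proof -
    obtain z where z: "f b - f a = (b - a) * f' z" using MVT2[of a b f f'] ab d by blast
    have "\<bar>f b - f a\<bar> = (b - a) * \<bar>f' z\<bar>" using z that by (simp add: abs_mult)
    also have "\<dots> \<le> (b - a) * K" using b[of z] that by (intro mult_left_mono) auto
    finally show ?thesis using that by (simp add: mult.commute)
  qed
  show ?thesis
  proof (cases s t rule: linorder_cases)
    case less then show ?thesis using *[OF less] by (simp add: abs_minus_commute)
  next
    case equal then show ?thesis by simp
  next
    case greater then show ?thesis using *[OF greater] by simp
  qed
qed

lemma tail_to_zero:
  fixes f :: "real \<Rightarrow> real"
  assumes cont: "continuous_on UNIV f" and nn: "\<And>t. 0 \<le> f t"
    and int: "set_integrable lborel {T..} f"
    and lip: "\<And>s t. \<bar>f s - f t\<bar> \<le> K * \<bar>s - t\<bar>"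
  shows "(f \<longlongrightarrow> 0) at_top"
proof -
  define K' where "K' = max K 0 + 1"
  have K'pos: "K' > 0" unfolding K'_def by simp
  have lip': "\<bar>f s - f t\<bar> \<le> K' * \<bar>s - t\<bar>" for s t
  proof -
    have "K * \<bar>s - t\<bar> \<le> K' * \<bar>s - t\<bar>" unfolding K'_def by (intro mult_right_mono) auto
    then show ?thesis using lip[of s t] by linarith
  qed
  define \<Phi> where "\<Phi> x = integral {T..x} f" for x
  have fint: "f integrable_on {a..b}" for a b
    by (rule integrable_continuous_interval) (rule continuous_on_subset[OF cont], simp)
  have \<Phi>eq: "\<Phi> x = (LINT t:{T..x}|lborel. f t)" if "T \<le> x" for x
  proof -
    have "set_integrable lborel {T..x} f" by (rule set_integrable_subset[OF int]) auto
    from set_borel_integral_eq_integral(2)[OF this] show ?thesis unfolding \<Phi>_def by simp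
  qed
  have "((\<lambda>x. LINT t:{T..x}|lborel. f t) \<longlongrightarrow> (LINT t:{T..}|lborel. f t)) at_top"
    by (rule tendsto_set_lebesgue_integral_at_top[OF _ int]) auto
  then have lim: "(\<Phi> \<longlongrightarrow> (LINT t:{T..}|lborel. f t)) at_top"
    by (rule Lim_transform_eventually) (unfold eventually_at_top_linorder, intro exI[of _ T], auto simp: \<Phi>eq)
  have diff: "((\<lambda>x. \<Phi> (x + r) - \<Phi> x) \<longlongrightarrow> 0) at_top" for r
  proof -
    have "filterlim (\<lambda>x. r + x) at_top at_top"
      by (rule filterlim_tendsto_add_at_top[OF tendsto_const filterlim_ident])
    then have "filterlim (\<lambda>x. x + r) at_top at_top" by (simp add: add.commute)
    from filterlim_compose[OF lim this] have "((\<lambda>x. \<Phi> (x + r)) \<longlongrightarrow> (LINT t:{T..}|lborel. f t)) at_top" .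
    from tendsto_diff[OF this lim] show ?thesis by simp
  qed
  have key: "r * (f x - K' * r) \<le> \<Phi> (x + r) - \<Phi> x" if "T \<le> x" "0 < r" for x r
  proof -
    have "integral {T..x} f + integral {x..x+r} f = integral {T..x+r} f"
      by (rule Henstock_Kurzweil_Integration.integral_combine) (use that fint in auto)
    then have eq: "\<Phi> (x + r) - \<Phi> x = integral {x..x+r} f" unfolding \<Phi>_def by simp
    have "integral {x..x+r} (\<lambda>_. f x - K' * r) \<le> integral {x..x+r} f"
    proof (rule integral_le)
      fix s assume s: "s \<in> {x..x+r}"
      have "\<bar>f x - f s\<bar> \<le> K' * \<bar>x - s\<bar>" by (rule lip')
      moreover have "K' * \<bar>x - s\<bar> \<le> K' * r" using s K'pos by (intro mult_left_mono) auto
      ultimately show "f x - K' * r \<le> f s" by linarith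
    qed (auto simp: fint)
    moreover have "integral {x..x+r} (\<lambda>_. f x - K' * r) = r * (f x - K' * r)"
      using that by (simp add: integral_const_real content_real)
    ultimately show ?thesis using eq by linarith
  qed
  show ?thesis
  proof (rule tendstoI)
    fix \<epsilon> :: real assume \<epsilon>: "0 < \<epsilon>"
    define r where "r = \<epsilon> / (2 * K')"
    have r: "0 < r" unfolding r_def using \<epsilon> K'pos by simp
    have Kr: "K' * r = \<epsilon> / 2" unfolding r_def using K'pos by simp
    have "\<forall>\<^sub>F x in at_top. dist (\<Phi> (x + r) - \<Phi> x) 0 < r * (\<epsilon> / 2)"
      using tendstoD[OF diff, of "r * (\<epsilon> / 2)"] r \<epsilon> by simp
    moreover have "\<forall>\<^sub>F x in at_top. T \<le> x" by (rule eventually_ge_at_top)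
    ultimately show "\<forall>\<^sub>F x in at_top. dist (f x) 0 < \<epsilon>"
    proof eventually_elim
      case (elim x)
      have "r * (f x - K' * r) < r * (\<epsilon> / 2)"
      proof -
        have "\<bar>\<Phi> (x + r) - \<Phi> x\<bar> < r * (\<epsilon> / 2)" using elim(1) by (simp add: dist_real_def)
        then show ?thesis using key[OF elim(2) r] abs_ge_self[of "\<Phi> (x + r) - \<Phi> x"] by linarith
      qed
      then have "f x - K' * r < \<epsilon> / 2" using r by simp
      then show ?case using Kr nn[of x] by (simp add: dist_real_def)
    qed
  qed
qed

context thm_setup begin

lemma q_int: "set_integrable lborel {T..} (\<lambda>t. \<epsilon> l * D l t + R l t)"
  unfolding set_integrable_def
proof (rule integrableI_bounded)
  show "(\<lambda>x. indicat_real {T..} x *\<^sub>R (\<epsilon> l * D l x + R l x)) \<in> borel_measurable lborel" by measurable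
  have "(\<integral>\<^sup>+ x. ennreal (norm (indicat_real {T..} x *\<^sub>R (\<epsilon> l * D l x + R l x))) \<partial>lborel) = (\<Sum>j. F l j)"
    unfolding sumF_eq by (rule nn_integral_cong) (auto split: split_indicator simp: abs_of_nonneg Q_nonneg)
  then show "(\<integral>\<^sup>+ x. ennreal (norm (indicat_real {T..} x *\<^sub>R (\<epsilon> l * D l x + R l x))) \<partial>lborel) < \<infinity>"
    using F_sum_fin by simp
qed

lemma R_int': "set_integrable lborel {T..} (R l)"
proof (rule R_int)
  fix j assume "j < l"
  show "F l j < \<infinity>" by (rule F_fin_lower[OF F_sum_fin])
qed

lemma D_int: "set_integrable lborel {T..} (D l)"
proof -
  have "set_integrable lborel {T..} (\<lambda>t. \<epsilon> l * ((\<epsilon> l * D l t + R l t) - R l t))"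
    by (intro set_integrable_mult_right set_integral_diff q_int R_int')
  moreover have "(\<lambda>t. \<epsilon> l * ((\<epsilon> l * D l t + R l t) - R l t)) = D l"
  proof
    fix t
    have "\<epsilon> l * ((\<epsilon> l * D l t + R l t) - R l t) = (\<epsilon> l * \<epsilon> l) * D l t" by (simp add: algebra_simps)
    then show "\<epsilon> l * ((\<epsilon> l * D l t + R l t) - R l t) = D l t" using eps_sq[of l] by simp
  qed
  ultimately show ?thesis by simp
qed

lemma hll_conv: "(h l l \<longlongrightarrow> h l l T + (LINT t:{T..}|lborel. D l t)) at_top"
proof -
  have "((\<lambda>x. LINT t:{T..x}|lborel. D l t) \<longlongrightarrow> (LINT t:{T..}|lborel. D l t)) at_top"
    by (rule tendsto_set_lebesgue_integral_at_top[OF _ D_int]) auto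
  then have "((\<lambda>x. h l l T + (LINT t:{T..x}|lborel. D l t)) \<longlongrightarrow> h l l T + (LINT t:{T..}|lborel. D l t)) at_top"
    by (intro tendsto_add tendsto_const)
  then show ?thesis
    by (rule Lim_transform_eventually) (unfold eventually_at_top_linorder, intro exI[of _ T], auto simp: FTC_h(2))
qed

definition v where "v l t = H t (e l) - h l l t *\<^sub>R e l"

lemma inner_v: "inner (v l t) (e j) = (if j = l then 0 else h l j t)"
  by (simp add: v_def inner_diff_left h_def inner_e)

lemma v_pars: "(\<lambda>j. if j = l then 0 else \<bar>h l j t\<bar>\<^sup>2) sums (norm (v l t))\<^sup>2"
proof -
  have "(\<lambda>j. (inner (v l t) (e j))\<^sup>2) sums (norm (v l t))\<^sup>2" by (rule parseval[OF basis])
  moreover have "(\<lambda>j. (inner (v l t) (e j))\<^sup>2) = (\<lambda>j. if j = l then 0 else \<bar>h l j t\<bar>\<^sup>2)"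
    by (rule ext) (simp add: inner_v)
  ultimately show ?thesis by simp
qed

lemma part3:
  assumes c: "c > 0" "\<And>j t. j \<noteq> l \<Longrightarrow> t \<ge> T \<Longrightarrow> \<bar>g l j t\<bar> \<ge> c"
  shows "(\<Sum>j. if j = l then 0 else \<integral>\<^sup>+ t \<in> {T..}. ennreal (\<bar>h l j t\<bar>\<^sup>2) \<partial>lborel)
           = (\<integral>\<^sup>+ t \<in> {T..}. ennreal ((norm (H t (e l) - h l l t *\<^sub>R e l))\<^sup>2) \<partial>lborel)"
    and "(\<integral>\<^sup>+ t \<in> {T..}. ennreal ((norm (H t (e l) - h l l t *\<^sub>R e l))\<^sup>2) \<partial>lborel) < \<infinity>"
proof -
  let ?G = "\<lambda>j t. ennreal (if j = l then 0 else \<bar>h l j t\<bar>\<^sup>2) * indicator {T..} t"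
  have eq1: "(\<Sum>j. if j = l then 0 else \<integral>\<^sup>+ t \<in> {T..}. ennreal (\<bar>h l j t\<bar>\<^sup>2) \<partial>lborel)
      = (\<Sum>j. \<integral>\<^sup>+ t. ?G j t \<partial>lborel)"
    by (rule suminf_cong) simp
  also have "\<dots> = (\<integral>\<^sup>+ t. (\<Sum>j. ?G j t) \<partial>lborel)"
    by (rule nn_integral_suminf[symmetric]) measurable
  also have "\<dots> = (\<integral>\<^sup>+ t \<in> {T..}. ennreal ((norm (H t (e l) - h l l t *\<^sub>R e l))\<^sup>2) \<partial>lborel)"
  proof (rule nn_integral_cong)
    fix t
    have "(\<Sum>j. ennreal (if j = l then 0 else \<bar>h l j t\<bar>\<^sup>2)) = ennreal ((norm (v l t))\<^sup>2)"
      by (rule suminf_ennreal_eq[OF _ v_pars]) simp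
    then show "(\<Sum>j. ?G j t) = ennreal ((norm (H t (e l) - h l l t *\<^sub>R e l))\<^sup>2) * indicator {T..} t"
      by (simp only: ennreal_suminf_multc v_def)
  qed
  finally show eq: "(\<Sum>j. if j = l then 0 else \<integral>\<^sup>+ t \<in> {T..}. ennreal (\<bar>h l j t\<bar>\<^sup>2) \<partial>lborel)
           = (\<integral>\<^sup>+ t \<in> {T..}. ennreal ((norm (H t (e l) - h l l t *\<^sub>R e l))\<^sup>2) \<partial>lborel)" .
  have le: "(if j = l then 0 else \<integral>\<^sup>+ t \<in> {T..}. ennreal (\<bar>h l j t\<bar>\<^sup>2) \<partial>lborel) \<le> ennreal (1 / c) * F l j" for j
  proof (cases "j = l")
    case False
    have "(\<integral>\<^sup>+ t \<in> {T..}. ennreal (\<bar>h l j t\<bar>\<^sup>2) \<partial>lborel)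
        \<le> (\<integral>\<^sup>+ t. ennreal (1 / c) * (ennreal (\<bar>g l j t\<bar> * \<bar>h l j t\<bar>\<^sup>2) * indicator {T..} t) \<partial>lborel)"
    proof (rule nn_integral_mono)
      fix t
      show "ennreal (\<bar>h l j t\<bar>\<^sup>2) * indicator {T..} t \<le> ennreal (1 / c) * (ennreal (\<bar>g l j t\<bar> * \<bar>h l j t\<bar>\<^sup>2) * indicator {T..} t)"
      proof (cases "T \<le> t")
        case True
        have "c * \<bar>h l j t\<bar>\<^sup>2 \<le> \<bar>g l j t\<bar> * \<bar>h l j t\<bar>\<^sup>2"
          by (rule mult_right_mono[OF c(2)[OF False True]]) simp
        then have "\<bar>h l j t\<bar>\<^sup>2 \<le> (1 / c) * (\<bar>g l j t\<bar> * \<bar>h l j t\<bar>\<^sup>2)"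
          using c(1) by (simp add: field_simps)
        from ennreal_le_mult_aux[OF this] c(1) True show ?thesis by simp
      qed simp
    qed
    also have "\<dots> = ennreal (1 / c) * F l j"
      unfolding F_def by (rule nn_integral_cmult) measurable
    finally show ?thesis using False by simp
  qed simp
  have "(\<Sum>j. if j = l then 0 else \<integral>\<^sup>+ t \<in> {T..}. ennreal (\<bar>h l j t\<bar>\<^sup>2) \<partial>lborel) \<le> (\<Sum>j. ennreal (1 / c) * F l j)"
    by (rule suminf_le[OF le]) auto
  also have "\<dots> = ennreal (1 / c) * (\<Sum>j. F l j)" by (rule ennreal_suminf_cmult)
  also have "\<dots> < \<infinity>" using F_sum_fin[of l] by (simp add: ennreal_mult_less_top)
  finally show "(\<integral>\<^sup>+ t \<in> {T..}. ennreal ((norm (H t (e l) - h l l t *\<^sub>R e l))\<^sup>2) \<partial>lborel) < \<infinity>"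
    using eq by simp
qed

lemma vder: "(v l has_vector_derivative (H' t (e l) - D l t *\<^sub>R e l)) (at t)"
proof -
  have "((\<lambda>t. H t (e l) - h l l t *\<^sub>R e l) has_vector_derivative (H' t (e l) - (h l l t *\<^sub>R 0 + D l t *\<^sub>R e l))) (at t)"
    by (intro has_vector_derivative_diff Hder has_vector_derivative_scaleR hder has_vector_derivative_const)
  then show ?thesis by (simp add: v_def[abs_def])
qed

lemma vcont: "continuous_on S (v l)"
  by (meson continuous_at_imp_continuous_on has_vector_derivative_continuous vder)

lemma v_norm: "norm (v l t) \<le> 2 * B"
proof -
  have "norm (v l t) \<le> norm (H t (e l)) + norm (h l l t *\<^sub>R e l)"
    unfolding v_def by (rule norm_triangle_ineq4)
  also have "\<dots> \<le> B + B" using normH[of t l] h_abs[of l l t] by (simp add: norm_e)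
  finally show ?thesis by simp
qed

lemma fder: "((\<lambda>t. (norm (v l t))\<^sup>2) has_real_derivative 2 * inner (v l t) (H' t (e l) - D l t *\<^sub>R e l)) (at t)"
proof -
  let ?w = "H' t (e l) - D l t *\<^sub>R e l"
  have d: "(v l has_derivative (\<lambda>x. x *\<^sub>R ?w)) (at t)" using vder unfolding has_vector_derivative_def .
  have "((\<lambda>t. inner (v l t) (v l t)) has_derivative (\<lambda>x. inner (v l t) (x *\<^sub>R ?w) + inner (x *\<^sub>R ?w) (v l t))) (at t)"
    by (rule has_derivative_inner[OF d d])
  moreover have "(\<lambda>x. inner (v l t) (x *\<^sub>R ?w) + inner (x *\<^sub>R ?w) (v l t)) = (*) (2 * inner (v l t) ?w)"
    by (rule ext) (simp add: inner_commute algebra_simps)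
  ultimately show ?thesis by (simp add: has_field_derivative_def power2_norm_eq_inner)
qed

lemma part4:
  assumes c: "c > 0" "\<And>j t. j \<noteq> l \<Longrightarrow> t \<ge> T \<Longrightarrow> \<bar>g l j t\<bar> \<ge> c"
    and B': "\<And>t. norm (H' t (e l)) \<le> B'"
  shows "((\<lambda>t. H t (e l)) \<longlongrightarrow> Lim at_top (h l l) *\<^sub>R e l) at_top"
proof -
  let ?f = "\<lambda>t. (norm (v l t))\<^sup>2"
  have fcont: "continuous_on UNIV ?f" by (intro continuous_intros vcont)
  have fint: "set_integrable lborel {T..} ?f"
    unfolding set_integrable_def
  proof (rule integrableI_bounded)
    show "(\<lambda>x. indicat_real {T..} x *\<^sub>R ?f x) \<in> borel_measurable lborel"
      using borel_measurable_continuous_onI[OF fcont] by measurable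
    have "(\<integral>\<^sup>+ x. ennreal (norm (indicat_real {T..} x *\<^sub>R ?f x)) \<partial>lborel)
        = (\<integral>\<^sup>+ t \<in> {T..}. ennreal ((norm (H t (e l) - h l l t *\<^sub>R e l))\<^sup>2) \<partial>lborel)"
      by (rule nn_integral_cong) (simp add: v_def split: split_indicator)
    then show "(\<integral>\<^sup>+ x. ennreal (norm (indicat_real {T..} x *\<^sub>R ?f x)) \<partial>lborel) < \<infinity>"
      using part3(2)[OF c] by simp
  qed
  have wb: "norm (H' t (e l) - D l t *\<^sub>R e l) \<le> 2 * B'" for t
  proof -
    have "norm (H' t (e l) - D l t *\<^sub>R e l) \<le> norm (H' t (e l)) + norm (D l t *\<^sub>R e l)"
      by (rule norm_triangle_ineq4)
    also have "norm (D l t *\<^sub>R e l) = \<bar>D l t\<bar>" by (simp add: norm_e)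
    also have "\<bar>D l t\<bar> \<le> norm (H' t (e l))" unfolding D_def by (rule abs_inner_e)
    finally show ?thesis using B'[of t] by simp
  qed
  have "\<bar>2 * inner (v l t) (H' t (e l) - D l t *\<^sub>R e l)\<bar> \<le> 2 * ((2 * B) * (2 * B'))" for t
  proof -
    have "\<bar>inner (v l t) (H' t (e l) - D l t *\<^sub>R e l)\<bar> \<le> norm (v l t) * norm (H' t (e l) - D l t *\<^sub>R e l)"
      by (rule Cauchy_Schwarz_ineq2)
    also have "\<dots> \<le> (2 * B) * (2 * B')"
      by (rule mult_mono[OF v_norm wb]) (use B_nonneg in auto)
    finally show ?thesis by simp
  qed
  from lip_from_deriv[OF fder this]
  have lip: "\<bar>?f s - ?f t\<bar> \<le> 2 * ((2 * B) * (2 * B')) * \<bar>s - t\<bar>" for s t .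
  have "(?f \<longlongrightarrow> 0) at_top" by (rule tail_to_zero[OF fcont _ fint lip]) simp
  then have "((\<lambda>t. sqrt (?f t)) \<longlongrightarrow> sqrt 0) at_top" by (rule tendsto_real_sqrt)
  then have "((\<lambda>t. norm (v l t)) \<longlongrightarrow> 0) at_top" by simp
  then have v0: "(v l \<longlongrightarrow> 0) at_top" by (rule tendsto_norm_zero_cancel)
  have hL: "(h l l \<longlongrightarrow> Lim at_top (h l l)) at_top"
  proof -
    have "Lim at_top (h l l) = h l l T + (LINT t:{T..}|lborel. D l t)"
      by (rule tendsto_Lim[OF _ hll_conv]) simp
    then show ?thesis using hll_conv by simp
  qed
  have "((\<lambda>t. v l t + h l l t *\<^sub>R e l) \<longlongrightarrow> 0 + Lim at_top (h l l) *\<^sub>R e l) at_top"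
    by (intro tendsto_add v0 tendsto_scaleR hL tendsto_const)
  then show ?thesis by (simp add: v_def)
qed

end
theorem theorem1p1:
  fixes e :: "nat \<Rightarrow> 'a::{real_inner,complete_space}"
    and H H' :: "real \<Rightarrow> 'a \<Rightarrow> 'a"
    and h g :: "nat \<Rightarrow> nat \<Rightarrow> real \<Rightarrow> real"
    and T :: real and \<epsilon> :: "nat \<Rightarrow> real"
  assumes basis: "hilbert_basis e"
    and C1: "HS_C1 e H H'"
    and h_def: "\<And>i j t. h i j t = inner (H t (e i)) (e j)"
    and bdd: "\<exists>B. \<forall>t. hs_norm e (H t) \<le> B"
    and h_bal: "balanced h"
    and g_meas: "\<And>i j. g i j \<in> borel_measurable lborel"
    and g_pb: "pointwise_bounded g"
    and g_bal: "balanced g"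
    and deriv_eq: "\<And>i t. (\<lambda>j. g i j t * \<bar>h i j t\<bar>\<^sup>2) sums (deriv (h i i) t)"
    and T_pos: "T > 0"
    and eps: "\<And>l. \<epsilon> l \<in> {-1, 1}"
    and sign: "\<And>t k l. t \<ge> T \<Longrightarrow> k \<ge> l \<Longrightarrow> \<epsilon> l * g l k t \<ge> 0"
  shows "(\<forall>l. (\<Sum>j. \<integral>\<^sup>+ t \<in> {T..}. ennreal (\<bar>g l j t\<bar> * \<bar>h l j t\<bar>\<^sup>2) \<partial>lborel) < \<infinity>)
    \<and> (\<forall>l. \<exists>L. (h l l \<longlongrightarrow> L) at_top)
    \<and> ((\<forall>l. \<exists>c>0. \<forall>j t. j \<noteq> l \<longrightarrow> t \<ge> T \<longrightarrow> \<bar>g l j t\<bar> \<ge> c) \<longrightarrow>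
         (\<forall>l. (\<Sum>j. if j = l then 0 else \<integral>\<^sup>+ t \<in> {T..}. ennreal (\<bar>h l j t\<bar>\<^sup>2) \<partial>lborel)
               = (\<integral>\<^sup>+ t \<in> {T..}. ennreal ((norm (H t (e l) - h l l t *\<^sub>R e l))\<^sup>2) \<partial>lborel)
            \<and> (\<integral>\<^sup>+ t \<in> {T..}. ennreal ((norm (H t (e l) - h l l t *\<^sub>R e l))\<^sup>2) \<partial>lborel) < \<infinity>)
       \<and> ((\<forall>l. \<exists>B. \<forall>t. norm (H' t (e l)) \<le> B) \<longrightarrow>
            (\<forall>l. ((\<lambda>t. H t (e l)) \<longlongrightarrow> Lim at_top (h l l) *\<^sub>R e l) at_top)))"
proof -
  obtain B where B: "\<And>t. hs_norm e (H t) \<le> B" using bdd by blast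
  interpret S: thm_setup e H H' h g T \<epsilon> B
    by unfold_locales (fact basis C1 h_def B h_bal g_meas g_bal deriv_eq T_pos eps sign)+
  have c1: "\<forall>l. (\<Sum>j. \<integral>\<^sup>+ t \<in> {T..}. ennreal (\<bar>g l j t\<bar> * \<bar>h l j t\<bar>\<^sup>2) \<partial>lborel) < \<infinity>"
    using S.F_sum_fin unfolding S.F_def by blast
  have c2: "\<forall>l. \<exists>L. (h l l \<longlongrightarrow> L) at_top" using S.hll_conv by blast
  have c3: "(\<forall>l. \<exists>c>0. \<forall>j t. j \<noteq> l \<longrightarrow> t \<ge> T \<longrightarrow> \<bar>g l j t\<bar> \<ge> c) \<longrightarrow>
         (\<forall>l. (\<Sum>j. if j = l then 0 else \<integral>\<^sup>+ t \<in> {T..}. ennreal (\<bar>h l j t\<bar>\<^sup>2) \<partial>lborel)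
               = (\<integral>\<^sup>+ t \<in> {T..}. ennreal ((norm (H t (e l) - h l l t *\<^sub>R e l))\<^sup>2) \<partial>lborel)
            \<and> (\<integral>\<^sup>+ t \<in> {T..}. ennreal ((norm (H t (e l) - h l l t *\<^sub>R e l))\<^sup>2) \<partial>lborel) < \<infinity>)
       \<and> ((\<forall>l. \<exists>B. \<forall>t. norm (H' t (e l)) \<le> B) \<longrightarrow>
            (\<forall>l. ((\<lambda>t. H t (e l)) \<longlongrightarrow> Lim at_top (h l l) *\<^sub>R e l) at_top))"
  proof (intro impI)
    assume A: "\<forall>l. \<exists>c>0. \<forall>j t. j \<noteq> l \<longrightarrow> t \<ge> T \<longrightarrow> \<bar>g l j t\<bar> \<ge> c"
    have P3: "(\<Sum>j. if j = l then 0 else \<integral>\<^sup>+ t \<in> {T..}. ennreal (\<bar>h l j t\<bar>\<^sup>2) \<partial>lborel)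
               = (\<integral>\<^sup>+ t \<in> {T..}. ennreal ((norm (H t (e l) - h l l t *\<^sub>R e l))\<^sup>2) \<partial>lborel)
            \<and> (\<integral>\<^sup>+ t \<in> {T..}. ennreal ((norm (H t (e l) - h l l t *\<^sub>R e l))\<^sup>2) \<partial>lborel) < \<infinity>" for l
    proof -
      from A obtain c where c: "c > 0" "\<And>j t. j \<noteq> l \<Longrightarrow> t \<ge> T \<Longrightarrow> \<bar>g l j t\<bar> \<ge> c" by blast
      show ?thesis using S.part3[OF c] by blast
    qed
    have P4: "((\<lambda>t. H t (e l)) \<longlongrightarrow> Lim at_top (h l l) *\<^sub>R e l) at_top"
      if A2: "\<forall>l. \<exists>B. \<forall>t. norm (H' t (e l)) \<le> B" for l
    proof -
      from A obtain c where c: "c > 0" "\<And>j t. j \<noteq> l \<Longrightarrow> t \<ge> T \<Longrightarrow> \<bar>g l j t\<bar> \<ge> c" by blast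
      from A2 obtain B' where B': "\<And>t. norm (H' t (e l)) \<le> B'" by blast
      show ?thesis by (rule S.part4[OF c B'])
    qed
    show "(\<forall>l. (\<Sum>j. if j = l then 0 else \<integral>\<^sup>+ t \<in> {T..}. ennreal (\<bar>h l j t\<bar>\<^sup>2) \<partial>lborel)
               = (\<integral>\<^sup>+ t \<in> {T..}. ennreal ((norm (H t (e l) - h l l t *\<^sub>R e l))\<^sup>2) \<partial>lborel)
            \<and> (\<integral>\<^sup>+ t \<in> {T..}. ennreal ((norm (H t (e l) - h l l t *\<^sub>R e l))\<^sup>2) \<partial>lborel) < \<infinity>)
       \<and> ((\<forall>l. \<exists>B. \<forall>t. norm (H' t (e l)) \<le> B) \<longrightarrow>
            (\<forall>l. ((\<lambda>t. H t (e l)) \<longlongrightarrow> Lim at_top (h l l) *\<^sub>R e l) at_top))"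
      using P3 P4 by blast
  qed
  show ?thesis using c1 c2 c3 by blast
qed

end
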